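(* For every positive integer $n$ and every $r \in [\sqrt{\frac{13}{48}}, \frac{\sqrt{3}}{3})$, we have $N_n(r) \ge \lceil \frac{n}{2} \rceil$.
   Context: For a positive integer $n$, let $\mathcal{P}_n$ denote the family of all sets of $n$ points in the Euclidean plane such that the distance between any two points of the set is at most $1$. For $0 < r \le 1$, let $N_n(r)$ be the largest integer $k$ such that for every $P \in \mathcal{P}_n$ there exists a circle of radius $r$ (i.e. a closed disc of radius $r$) which covers (contains) at least $k$ points of $P$. *)

theory Defs
  imports "HOL-Analysis.Analysis"
begin

definition point_family :: "nat \<Rightarrow> (real^2) set set" where
  "point_family n = {P. finite P \<and> card P = n \<and> (\<forall>x\<in>P. \<forall>y\<in>P. dist x y \<le> 1)}"

definition N :: "nat \<Rightarrow> real \<Rightarrow> nat" where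
  "N n r = (GREATEST k. \<forall>P\<in>point_family n. \<exists>c. card (P \<inter> cball c r) \<ge> k)"

end

theory Submission
  imports Defs
begin

definition uu :: "real \<Rightarrow> real^2" where "uu t = vector [cos t, sin t]"

lemma uu_inner: "w \<bullet> uu t = w$1 * cos t + w$2 * sin t"
  by (simp add: uu_def inner_vec_def sum_2)

lemma uu_add: "uu (t + s) = cos s *\<^sub>R uu t + sin s *\<^sub>R uu (t + pi/2)"
  by (simp add: vec_eq_iff forall_2 uu_def cos_add sin_add algebra_simps)

lemma uu_pi: "uu (t + pi) = - uu t"
  by (simp add: vec_eq_iff forall_2 uu_def)

lemma uu_2pi: "uu (t + 2*pi) = uu t"
  by (simp add: vec_eq_iff forall_2 uu_def)

lemma uu_uu: "uu s \<bullet> uu t = cos (s - t)"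
  by (subst uu_inner) (simp add: uu_def cos_diff)

lemma norm_uu: "norm (uu t) = 1"
  by (simp add: norm_eq_sqrt_inner uu_uu)

lemma norm_sq_aux: "(c::real)*c + s* s = 1 \<Longrightarrow> a*a + b*b = (a*c+b* s)^2 + (a* (-s) + b*c)^2"
proof -
  assume h: "c*c + s* s = 1"
  have "(a*c+b* s)^2 + (a* (-s) + b*c)^2 = (a*a+b*b)*(c*c+s* s)" by (simp add: power2_eq_square algebra_simps)
  then show ?thesis using h by simp
qed

lemma norm_sq: "(norm w)^2 = (w \<bullet> uu t)^2 + (w \<bullet> uu (t+pi/2))^2"
proof -
  have "(norm w)^2 = w$1*w$1 + w$2*w$2" unfolding power2_norm_eq_inner by (simp add: inner_vec_def sum_2)
  also have "\<dots> = (w$1*cos t + w$2* sin t)^2 + (w$1*(- sin t) + w$2*cos t)^2"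
    by (rule norm_sq_aux) (simp add: sin_cos_squared_add3)
  also have "\<dots> = (w \<bullet> uu t)^2 + (w \<bullet> uu (t+pi/2))^2"
    by (simp add: uu_inner cos_add sin_add)
  finally show ?thesis .
qed

lemma arith_cover:
  fixes X Y :: real
  assumes "\<bar>X\<bar> \<le> 1/2" "\<bar>X/2 + sqrt 3/2*Y\<bar> \<le> 1/2" "\<bar>-X/2 + sqrt 3/2*Y\<bar> \<le> 1/2" "Y \<ge> 0"
  shows "X^2 + (Y - sqrt 3/12)^2 \<le> 13/48"
proof -
  define T where "T = sqrt 3 * Y"
  have s3: "sqrt 3 * sqrt 3 = 3" by simp
  have T0: "T \<ge> 0" using assms(4) by (simp add: T_def)
  have Ta: "T + \<bar>X\<bar> \<le> 1" using assms(2,3) by (auto simp: T_def abs_if split: if_splits)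
  have eq: "X^2 + (Y - sqrt 3/12)^2 = X^2 + T^2/3 - T/6 + 1/48"
    unfolding T_def by (simp add: power2_eq_square algebra_simps s3)
  have "16*T^2 - 8*T \<le> T*(8 - 16*\<bar>X\<bar>)"
  proof -
    have "16*T*(T - (1 - \<bar>X\<bar>)) \<le> 0" using T0 Ta by (simp add: mult_nonneg_nonpos)
    then show ?thesis by (simp add: power2_eq_square algebra_simps)
  qed
  moreover have "T*(8 - 16*\<bar>X\<bar>) \<le> (1 - \<bar>X\<bar>)*(8 - 16*\<bar>X\<bar>)"
    using Ta assms(1) by (intro mult_right_mono) auto
  moreover have "48*\<bar>X\<bar>^2 + (1 - \<bar>X\<bar>)*(8 - 16*\<bar>X\<bar>) \<le> 12"
  proof -
    have "(8*\<bar>X\<bar>+1)*(2*\<bar>X\<bar>-1) \<le> 0" using assms(1) by (intro mult_nonneg_nonpos) auto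
    then show ?thesis by (simp add: power2_eq_square algebra_simps)
  qed
  ultimately have "48*X^2 + 16*T^2 - 8*T \<le> 12" by simp
  then show ?thesis unfolding eq by simp
qed

definition Mx :: "(real^2) set \<Rightarrow> real \<Rightarrow> real" where
  "Mx P t = Max ((\<lambda>p. p \<bullet> uu t) ` P)"

lemma cont_Max:
  fixes f :: "'a \<Rightarrow> real \<Rightarrow> real"
  assumes "finite P" "P \<noteq> {}" "\<And>p. p \<in> P \<Longrightarrow> continuous_on UNIV (f p)"
  shows "continuous_on UNIV (\<lambda>t. Max ((\<lambda>p. f p t) ` P))"
  using assms
proof (induction P rule: finite_ne_induct)
  case (singleton x)
  then show ?case by simp
next
  case (insert x F)
  have "(\<lambda>t. Max ((\<lambda>p. f p t) ` insert x F)) = (\<lambda>t. max (f x t) (Max ((\<lambda>p. f p t) ` F)))"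
    using insert.hyps by (simp add: Max_insert)
  moreover have "continuous_on UNIV (\<lambda>t. max (f x t) (Max ((\<lambda>p. f p t) ` F)))"
    using insert by (intro continuous_on_max) auto
  ultimately show ?case by metis
qed

lemma cont_uu: "continuous_on UNIV (\<lambda>t. p \<bullet> uu t)"
  unfolding uu_inner by (intro continuous_intros)

lemma cont_Mx: "finite P \<Longrightarrow> P \<noteq> {} \<Longrightarrow> continuous_on UNIV (Mx P)"
  unfolding Mx_def using cont_Max[of P "\<lambda>p t. p \<bullet> uu t"] cont_uu by blast

lemma Mx_ge: "finite P \<Longrightarrow> p \<in> P \<Longrightarrow> p \<bullet> uu t \<le> Mx P t"
  unfolding Mx_def by (rule Max_ge) auto

lemma Mx_in: "finite P \<Longrightarrow> P \<noteq> {} \<Longrightarrow> \<exists>p\<in>P. Mx P t = p \<bullet> uu t"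
proof -
  assume "finite P" "P \<noteq> {}"
  then have "Max ((\<lambda>p. p \<bullet> uu t) ` P) \<in> (\<lambda>p. p \<bullet> uu t) ` P" by (intro Max_in) auto
  then show ?thesis unfolding Mx_def by auto
qed

lemma Mx_width:
  assumes "finite P" "P \<noteq> {}" "\<forall>x\<in>P. \<forall>y\<in>P. dist x y \<le> 1"
  shows "Mx P t + Mx P (t + pi) \<le> 1"
proof -
  obtain p where p: "p \<in> P" "Mx P t = p \<bullet> uu t" using Mx_in assms by blast
  obtain p' where p': "p' \<in> P" "Mx P (t+pi) = p' \<bullet> uu (t+pi)" using Mx_in assms by blast
  have "Mx P t + Mx P (t + pi) = (p - p') \<bullet> uu t" using p p' by (simp add: uu_pi inner_diff_left)
  also have "\<dots> \<le> norm (p - p') * norm (uu t)" by (rule norm_cauchy_schwarz)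
  also have "\<dots> = dist p p'" by (simp add: norm_uu dist_norm)
  also have "\<dots> \<le> 1" using assms p p' by blast
  finally show ?thesis .
qed

lemma Mx_2pi: "Mx P (t + 2*pi) = Mx P t"
  by (simp add: Mx_def uu_2pi)

lemma Mx_neg: "finite P \<Longrightarrow> p \<in> P \<Longrightarrow> - (p \<bullet> uu t) \<le> Mx P (t + pi)"
  using Mx_ge[of P p "t + pi"] by (simp add: uu_pi)

lemma inner_uu_add: "w \<bullet> uu (t + s) = cos s * (w \<bullet> uu t) + sin s * (w \<bullet> uu (t + pi/2))"
  by (subst uu_add) (simp add: inner_add_right)

lemma hexagon:
  assumes fin: "finite P" and ne: "P \<noteq> {}" and dm: "\<forall>x\<in>P. \<forall>y\<in>P. dist x y \<le> 1"
  shows "\<exists>\<theta> q. \<forall>p\<in>P. \<bar>(p - q) \<bullet> uu \<theta>\<bar> \<le> 1/2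
     \<and> \<bar>((p - q) \<bullet> uu \<theta>)/2 + sqrt 3/2 * ((p - q) \<bullet> uu (\<theta> + pi/2))\<bar> \<le> 1/2
     \<and> \<bar>-((p - q) \<bullet> uu \<theta>)/2 + sqrt 3/2 * ((p - q) \<bullet> uu (\<theta> + pi/2))\<bar> \<le> 1/2"
proof -
  define g where "g t = Mx P t + Mx P (t + 2*pi/3) + Mx P (t + 4*pi/3)" for t
  define h where "h t = g t - g (t + pi/3)" for t
  have gper: "g (t + 2*pi/3) = g t" for t
  proof -
    have "t + 2*pi/3 + 2*pi/3 = t + 4*pi/3" by simp
    then have a: "Mx P (t + 2*pi/3 + 2*pi/3) = Mx P (t + 4*pi/3)" by (rule arg_cong)
    have "t + 2*pi/3 + 4*pi/3 = t + 2*pi" by simp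
    then have "Mx P (t + 2*pi/3 + 4*pi/3) = Mx P (t + 2*pi)" by (rule arg_cong)
    then have b: "Mx P (t + 2*pi/3 + 4*pi/3) = Mx P t" using Mx_2pi[of P t] by simp
    show ?thesis unfolding g_def using a b by linarith
  qed
  have hneg: "h (t + pi/3) = - h t" for t
  proof -
    have "t + pi/3 + pi/3 = t + 2*pi/3" by simp
    then have "g (t + pi/3 + pi/3) = g (t + 2*pi/3)" by (rule arg_cong)
    then show ?thesis unfolding h_def using gper[of t] by linarith
  qed
  have cM: "isCont (Mx P) x" for x
    using cont_Mx[OF fin ne] by (simp add: continuous_on_eq_continuous_at)
  have cMs: "isCont (\<lambda>t. Mx P (t + c)) x" for c x
    by (rule isCont_o2[OF _ cM]) (intro continuous_intros)
  have cg: "isCont g x" for x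
    unfolding g_def by (intro continuous_intros cM cMs)
  have cgs: "isCont (\<lambda>t. g (t + c)) x" for c x
    by (rule isCont_o2[OF _ cg]) (intro continuous_intros)
  have ch: "isCont h x" for x
    unfolding h_def by (intro continuous_intros cg cgs)
  have "\<exists>\<theta>. h \<theta> = 0"
  proof (cases "h 0 \<le> 0")
    case True
    then have "h (0 + pi/3) \<ge> 0" using hneg[of 0] by simp
    then show ?thesis using IVT[of h 0 0 "pi/3"] True ch by auto
  next
    case False
    then have "h (0 + pi/3) \<le> 0" using hneg[of 0] by simp
    then show ?thesis using IVT2[of h "pi/3" 0 0] False ch by auto
  qed
  then obtain \<theta> where h0: "h \<theta> = 0" by blast
  define A0 where "A0 = Mx P \<theta>"
  define A1 where "A1 = Mx P (\<theta> + pi/3)"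
  define A2 where "A2 = Mx P (\<theta> + 2*pi/3)"
  define A3 where "A3 = Mx P (\<theta> + pi)"
  define A4 where "A4 = Mx P (\<theta> + 4*pi/3)"
  define A5 where "A5 = Mx P (\<theta> + 5*pi/3)"
  have e1: "\<theta> + pi/3 + pi = \<theta> + 4*pi/3" by simp
  have e2: "\<theta> + 2*pi/3 + pi = \<theta> + 5*pi/3" by simp
  have e3: "\<theta> + pi/3 + 2*pi/3 = \<theta> + pi" by simp
  have e4: "\<theta> + pi/3 + 4*pi/3 = \<theta> + 5*pi/3" by simp
  have w0: "A0 + A3 \<le> 1" unfolding A0_def A3_def using Mx_width[OF fin ne dm] by blast
  have w1: "A1 + A4 \<le> 1" unfolding A1_def A4_def using Mx_width[OF fin ne dm, of "\<theta> + pi/3"] e1 by simp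
  have w2: "A2 + A5 \<le> 1" unfolding A2_def A5_def using Mx_width[OF fin ne dm, of "\<theta> + 2*pi/3"] e2 by simp
  have gg: "g \<theta> = A0 + A2 + A4" unfolding g_def A0_def A2_def A4_def by simp
  have gg2: "g (\<theta> + pi/3) = A1 + A3 + A5"
  proof -
    have "Mx P (\<theta> + pi/3 + 2*pi/3) = A3" unfolding A3_def using e3 by (rule arg_cong)
    moreover have "Mx P (\<theta> + pi/3 + 4*pi/3) = A5" unfolding A5_def using e4 by (rule arg_cong)
    ultimately show ?thesis unfolding g_def A1_def by linarith
  qed
  have G1: "A0 + A2 + A4 \<le> 3/2" and G2: "A1 + A3 + A5 \<le> 3/2"
    using h0 w0 w1 w2 gg gg2 unfolding h_def by linarith+
  define c1 where "c1 = max (A0 + A2 - 1) (A1 - 1/2)"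
  define c0 where "c0 = max (A0 - 1/2) (c1 - (1/2 - A5))"
  define c2 where "c2 = c1 - c0"
  define \<beta> where "\<beta> = (2*c2 + c0) / sqrt 3"
  define q where "q = c0 *\<^sub>R uu \<theta> + \<beta> *\<^sub>R uu (\<theta> + pi/2)"
  have qa: "q \<bullet> uu \<theta> = c0"
    by (simp add: q_def inner_add_left uu_uu)
  have qb: "q \<bullet> uu (\<theta> + pi/2) = \<beta>"
    by (simp add: q_def inner_add_left uu_uu)
  have s3: "sqrt 3 / 2 * \<beta> = c2 + c0/2" by (simp add: \<beta>_def field_simps)
  have q1: "q \<bullet> uu (\<theta> + pi/3) = c1"
    using inner_uu_add[of q \<theta> "pi/3"] qa qb s3 by (simp add: cos_60 sin_60 c2_def field_simps)
  have q2: "q \<bullet> uu (\<theta> + 2*pi/3) = c2"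
    using inner_uu_add[of q \<theta> "2*pi/3"] qa qb s3 by (simp add: cos_120 sin_120) (simp add: field_simps)
  have c0b: "A0 - 1/2 \<le> c0" "c0 \<le> 1/2 - A3" unfolding c0_def c1_def using w0 w1 w2 G1 G2 by auto
  have c1b: "A1 - 1/2 \<le> c1" "c1 \<le> 1/2 - A4" unfolding c1_def using w0 w1 w2 G1 G2 by auto
  have c2b: "A2 - 1/2 \<le> c2" "c2 \<le> 1/2 - A5" unfolding c2_def c0_def c1_def using w0 w1 w2 G1 G2 by auto
  show ?thesis
  proof (rule exI[of _ \<theta>], rule exI[of _ q], rule ballI)
    fix p assume pP: "p \<in> P"
    define X where "X = (p - q) \<bullet> uu \<theta>"
    define Y where "Y = (p - q) \<bullet> uu (\<theta> + pi/2)"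
    have b0: "\<bar>X\<bar> \<le> 1/2"
      using Mx_ge[OF fin pP, of \<theta>] Mx_neg[OF fin pP, of \<theta>] c0b qa
      unfolding X_def A0_def A3_def inner_diff_left abs_le_iff by linarith
    have "(p - q) \<bullet> uu (\<theta> + pi/3) = X/2 + sqrt 3/2 * Y"
      using inner_uu_add[of "p - q" \<theta> "pi/3"] by (simp add: cos_60 sin_60 X_def Y_def)
    moreover have "\<bar>(p - q) \<bullet> uu (\<theta> + pi/3)\<bar> \<le> 1/2"
      using Mx_ge[OF fin pP, of "\<theta> + pi/3"] Mx_neg[OF fin pP, of "\<theta> + pi/3", unfolded e1] c1b q1
      unfolding A1_def A4_def inner_diff_left abs_le_iff by linarith
    ultimately have b1: "\<bar>X/2 + sqrt 3/2 * Y\<bar> \<le> 1/2" by simp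
    have "(p - q) \<bullet> uu (\<theta> + 2*pi/3) = -X/2 + sqrt 3/2 * Y"
      using inner_uu_add[of "p - q" \<theta> "2*pi/3"] by (simp add: cos_120 sin_120 X_def Y_def)
    moreover have "\<bar>(p - q) \<bullet> uu (\<theta> + 2*pi/3)\<bar> \<le> 1/2"
      using Mx_ge[OF fin pP, of "\<theta> + 2*pi/3"] Mx_neg[OF fin pP, of "\<theta> + 2*pi/3", unfolded e2] c2b q2
      unfolding A2_def A5_def inner_diff_left abs_le_iff by linarith
    ultimately have b2: "\<bar>-X/2 + sqrt 3/2 * Y\<bar> \<le> 1/2" by simp
    show "\<bar>(p - q) \<bullet> uu \<theta>\<bar> \<le> 1/2
     \<and> \<bar>((p - q) \<bullet> uu \<theta>)/2 + sqrt 3/2 * ((p - q) \<bullet> uu (\<theta> + pi/2))\<bar> \<le> 1/2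
     \<and> \<bar>-((p - q) \<bullet> uu \<theta>)/2 + sqrt 3/2 * ((p - q) \<bullet> uu (\<theta> + pi/2))\<bar> \<le> 1/2"
      using b0 b1 b2 unfolding X_def Y_def by simp
  qed
qed


lemma two_discs:
  fixes P :: "(real^2) set"
  assumes fin: "finite P" and ne: "P \<noteq> {}" and dm: "\<forall>x\<in>P. \<forall>y\<in>P. dist x y \<le> 1"
  shows "\<exists>c1 c2. P \<subseteq> cball c1 (sqrt (13/48)) \<union> cball c2 (sqrt (13/48))"
proof -
  obtain \<theta> q where H: "\<forall>p\<in>P. \<bar>(p - q) \<bullet> uu \<theta>\<bar> \<le> 1/2
     \<and> \<bar>((p - q) \<bullet> uu \<theta>)/2 + sqrt 3/2 * ((p - q) \<bullet> uu (\<theta> + pi/2))\<bar> \<le> 1/2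
     \<and> \<bar>-((p - q) \<bullet> uu \<theta>)/2 + sqrt 3/2 * ((p - q) \<bullet> uu (\<theta> + pi/2))\<bar> \<le> 1/2"
    using hexagon[OF fin ne dm] by blast
  define v where "v = uu (\<theta> + pi/2)"
  have vu: "v \<bullet> uu \<theta> = 0" unfolding v_def by (simp add: uu_uu)
  have vv: "v \<bullet> v = 1" unfolding v_def by (simp add: uu_uu)
  define c1 where "c1 = q + (sqrt 3/12) *\<^sub>R v"
  define c2 where "c2 = q - (sqrt 3/12) *\<^sub>R v"
  show ?thesis
  proof (intro exI subsetI)
    fix p assume pP: "p \<in> P"
    define X where "X = (p - q) \<bullet> uu \<theta>"
    define Y where "Y = (p - q) \<bullet> v"
    have b: "\<bar>X\<bar> \<le> 1/2" "\<bar>X/2 + sqrt 3/2 * Y\<bar> \<le> 1/2" "\<bar>-X/2 + sqrt 3/2 * Y\<bar> \<le> 1/2"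
      using H pP unfolding X_def Y_def v_def by auto
    show "p \<in> cball c1 (sqrt (13/48)) \<union> cball c2 (sqrt (13/48))"
    proof (cases "Y \<ge> 0")
      case True
      have "(norm (p - c1))^2 = ((p - c1) \<bullet> uu \<theta>)^2 + ((p - c1) \<bullet> v)^2"
        unfolding v_def by (rule norm_sq)
      also have "\<dots> = X^2 + (Y - sqrt 3/12)^2"
      proof -
        have "(p - c1) \<bullet> uu \<theta> = X" unfolding c1_def X_def using vu by (simp add: inner_diff_left inner_add_left)
        moreover have "(p - c1) \<bullet> v = Y - sqrt 3/12" unfolding c1_def Y_def using vv by (simp add: inner_diff_left inner_add_left)
        ultimately show ?thesis by simp
      qed
      also have "\<dots> \<le> 13/48" using arith_cover[OF b True] .
      finally have "norm (p - c1) \<le> sqrt (13/48)" by (rule real_le_rsqrt)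
      then show ?thesis by (simp add: dist_norm norm_minus_commute)
    next
      case False
      have b': "\<bar>-X\<bar> \<le> 1/2" "\<bar>(-X)/2 + sqrt 3/2 * (-Y)\<bar> \<le> 1/2" "\<bar>-(-X)/2 + sqrt 3/2 * (-Y)\<bar> \<le> 1/2"
      proof -
        have m: "sqrt 3/2 * (-Y) = -(sqrt 3/2 * Y)" by simp
        show "\<bar>-X\<bar> \<le> 1/2" "\<bar>(-X)/2 + sqrt 3/2 * (-Y)\<bar> \<le> 1/2" "\<bar>-(-X)/2 + sqrt 3/2 * (-Y)\<bar> \<le> 1/2"
          using b unfolding m abs_le_iff by linarith+
      qed
      have "(norm (p - c2))^2 = ((p - c2) \<bullet> uu \<theta>)^2 + ((p - c2) \<bullet> v)^2"
        unfolding v_def by (rule norm_sq)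
      also have "\<dots> = (-X)^2 + (-Y - sqrt 3/12)^2"
      proof -
        have "(p - c2) \<bullet> uu \<theta> = X" unfolding c2_def X_def using vu by (simp add: inner_diff_left)
        moreover have "(p - c2) \<bullet> v = Y + sqrt 3/12" unfolding c2_def Y_def using vv by (simp add: inner_diff_left)
        ultimately show ?thesis by (simp add: power2_eq_square algebra_simps)
      qed
      also have "\<dots> \<le> 13/48" using arith_cover[OF b'] False by simp
      finally have "norm (p - c2) \<le> sqrt (13/48)" by (rule real_le_rsqrt)
      then show ?thesis by (simp add: dist_norm norm_minus_commute)
    qed
  qed
qed

lemma family_ne:
  assumes "n \<ge> 1"
  shows "point_family n \<noteq> {}"
proof -
  define P0 where "P0 = (\<lambda>i. (real i / real n) *\<^sub>R uu 0) ` {..<n}"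
  have inj: "inj_on (\<lambda>i. (real i / real n) *\<^sub>R uu 0) {..<n}"
  proof (rule inj_onI)
    fix i j assume "(real i / real n) *\<^sub>R uu 0 = (real j / real n) *\<^sub>R uu 0"
    then have "real i / real n = real j / real n"
      using norm_uu[of 0] by (metis scaleR_cancel_right norm_zero zero_neq_one)
    then show "i = j" using assms by (simp add: divide_cancel_right)
  qed
  have "P0 \<in> point_family n"
    unfolding point_family_def
  proof (intro CollectI conjI ballI)
    show "finite P0" unfolding P0_def by simp
    show "card P0 = n" unfolding P0_def using card_image[OF inj] by simp
    fix x y assume "x \<in> P0" "y \<in> P0"
    then obtain i j where ij: "i < n" "j < n" "x = (real i / real n) *\<^sub>R uu 0" "y = (real j / real n) *\<^sub>R uu 0"
      unfolding P0_def by auto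
    have "dist x y = \<bar>real i / real n - real j / real n\<bar>"
      using ij norm_uu[of 0] by (simp add: dist_norm scaleR_diff_left[symmetric])
    also have "\<dots> \<le> 1" using ij assms by (auto simp: abs_le_iff field_simps)
    finally show "dist x y \<le> 1" .
  qed
  then show ?thesis by blast
qed

theorem lemma1:
  fixes n :: nat and r :: real
  assumes "n \<ge> 1"
    and "sqrt (13 / 48) \<le> r" and "r < sqrt 3 / 3"
  shows "N n r \<ge> nat \<lceil>real n / 2\<rceil>"
proof -
  define Q where "Q k = (\<forall>P\<in>point_family n. \<exists>c. card (P \<inter> cball c r) \<ge> k)" for k
  have hQ: "Q (nat \<lceil>real n / 2\<rceil>)"
    unfolding Q_def
  proof
    fix P assume "P \<in> point_family n"
    then have fin: "finite P" and cP: "card P = n" and dm: "\<forall>x\<in>P. \<forall>y\<in>P. dist x y \<le> 1"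
      unfolding point_family_def by auto
    have ne: "P \<noteq> {}" using cP assms(1) by auto
    obtain c1 c2 where cov: "P \<subseteq> cball c1 (sqrt (13/48)) \<union> cball c2 (sqrt (13/48))"
      using two_discs[OF fin ne dm] by blast
    have sub: "cball c (sqrt (13/48)) \<subseteq> cball c r" for c
      using assms(2) by (rule subset_cball)
    have "P = (P \<inter> cball c1 r) \<union> (P \<inter> cball c2 r)" using cov sub by blast
    then have "n \<le> card (P \<inter> cball c1 r) + card (P \<inter> cball c2 r)"
      using cP card_Un_le by metis
    then have "n \<le> 2 * card (P \<inter> cball c1 r) \<or> n \<le> 2 * card (P \<inter> cball c2 r)" by linarith
    moreover have "nat \<lceil>real n / 2\<rceil> \<le> m" if "n \<le> 2 * m" for m
    proof -
      have "real n / 2 \<le> real m" using that by simp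
      then have "\<lceil>real n / 2\<rceil> \<le> int m" by (simp add: ceiling_le_iff)
      then have "nat \<lceil>real n / 2\<rceil> \<le> nat (int m)" by (rule nat_mono)
      then show ?thesis by simp
    qed
    ultimately show "\<exists>c. nat \<lceil>real n / 2\<rceil> \<le> card (P \<inter> cball c r)" by blast
  qed
  obtain P0 where P0: "P0 \<in> point_family n" using family_ne[OF assms(1)] by blast
  have bound: "k \<le> n" if qk: "Q k" for k
  proof -
    obtain c where "card (P0 \<inter> cball c r) \<ge> k" using qk P0 unfolding Q_def by blast
    moreover have "card (P0 \<inter> cball c r) \<le> card P0"
      using P0 unfolding point_family_def by (intro card_mono) auto
    ultimately show "k \<le> n" using P0 unfolding point_family_def by auto
  qed
  have "nat \<lceil>real n / 2\<rceil> \<le> (GREATEST k. Q k)"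
    by (rule Greatest_le_nat[where P=Q, OF hQ bound])
  then show ?thesis unfolding N_def Q_def by simp
qed

end
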